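(* Let $p\in(0,1)$, $d\ge2$ an integer, and $\psi(v)=-\frac{p}{d-p}\ln(v)-\ln(1+pv)$, so that $\mathrm{Re}\,\psi(v)=-\frac{p}{d-p}\ln|v|-\ln|1+pv|$. For each $v$ write the $d$ roots (with multiplicity) of $u(1+u)^{d-1}=v(1+v)^{d-1}$ as $v,u_1(v),\dots,u_{d-1}(v)$, where $u_1$ is the non-trivial solution with $u_1(-1/d)=-1/d$ and $u_2(v),\dots,u_{d-1}(v)$ are the other non-trivial solutions. Then there exists a path $\Gamma_0$ encircling the origin and passing through $v=-1/d$ such that $$\mathrm{Re}\,\psi(v)-\mathrm{Re}\,\psi(u_i(v))<0$$ for all $v\in\Gamma_0$ and $i=1,\dots,d-1$, except for the solution $u_1(v)$ at the point $v=-1/d$. *)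

theory Defs
  imports "HOL-Complex_Analysis.Complex_Analysis" "HOL-Computational_Algebra.Fundamental_Theorem_Algebra"
    "HOL-Library.Extended_Real"
begin

definition eln :: "real \<Rightarrow> ereal" where
  "eln x = (if x = 0 then -\<infinity> else ereal (ln x))"

text \<open>Real part of psi(v) = -(p/(d-p)) Ln v - Ln (1 + p v), as an extended real
  (value +infinity at v = 0 and at v = -1/p).\<close>
definition RePsi :: "real \<Rightarrow> nat \<Rightarrow> complex \<Rightarrow> ereal" where
  "RePsi p d v = - (ereal (p / (real d - p)) * eln (cmod v)) - eln (cmod (1 + of_real p * v))"

definition Fpoly :: "nat \<Rightarrow> complex \<Rightarrow> complex poly" where
  "Fpoly d v = [:0, 1:] * [:1, 1:] ^ (d - 1) - [: v * (1 + v) ^ (d - 1) :]"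

definition nontriv_roots :: "nat \<Rightarrow> complex \<Rightarrow> complex multiset" where
  "nontriv_roots d v = proots (Fpoly d v) - {# v #}"

end

theory Submission
  imports Defs
begin

lemma amgm:
  fixes x w :: real and n :: nat
  assumes "x > 0" "w > 0"
  shows "x * w^n \<le> ((x + n*w)/(n+1))^(n+1)"
    and "x \<noteq> w \<Longrightarrow> n \<ge> 1 \<Longrightarrow> x * w^n < ((x + n*w)/(n+1))^(n+1)"
proof -
  define A where "A = (x + n*w)/(n+1)"
  have A0: "A > 0" using assms by (auto simp: A_def intro!: divide_pos_pos add_pos_nonneg)
  have l1: "ln (x/A) \<le> x/A - 1" using assms A0 by (intro ln_le_minus_one) auto
  have l2: "ln (w/A) \<le> w/A - 1" using assms A0 by (intro ln_le_minus_one) auto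
  have sum0: "(x/A - 1) + n*(w/A - 1) = 0"
    using A0 by (simp add: A_def field_simps)
  have eq: "ln (x * w^n) - ln (A^(n+1)) = ln (x/A) + n * ln (w/A)"
    using assms A0 by (simp add: ln_mult ln_div ln_realpow algebra_simps)
  have le: "ln (x/A) + n * ln (w/A) \<le> 0"
    using l1 l2 sum0 by (smt (verit) mult_left_mono of_nat_0_le_iff)
  have pos: "x * w^n > 0" "A^(n+1) > 0" using assms A0 by auto
  show "x * w^n \<le> ((x + n*w)/(n+1))^(n+1)"
    using eq le pos unfolding A_def[symmetric] by (metis diff_le_0_iff_le ln_le_cancel_iff)
  assume "x \<noteq> w" "n \<ge> 1"
  hence "x \<noteq> A" using assms by (auto simp: A_def field_simps)
  hence "x/A \<noteq> 1" using A0 by auto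
  hence l1': "ln (x/A) < x/A - 1" using l1 ln_eq_minus_one[of "x/A"] assms A0 by force
  have "ln (x/A) + n * ln (w/A) < 0"
    using l1' l2 sum0 by (smt (verit) mult_left_mono of_nat_0_le_iff)
  then show "x * w^n < ((x + n*w)/(n+1))^(n+1)"
    using eq pos unfolding A_def[symmetric] by (metis diff_less_0_iff_less ln_less_cancel_iff)
qed

lemma deriv_Kpow:
  fixes K y :: real assumes "y > 0"
  shows "DERIV (\<lambda>y. K / y^n) y :> - (real n * K / y^(n+1))"
  using assms
  apply (auto intro!: derivative_eq_intros)
  apply (cases n) apply (auto simp: field_simps)
  done

lemma key_real:
  fixes p Xu Yu Yv :: real and n :: nat
  defines "d \<equiv> real n + 1"
  assumes p0: "0 < p" and p1: "p < 1" and n1: "n \<ge> 1"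
    and Yv: "Yv \<ge> (n/d)^2" and Xu: "Xu > 1/d^2" and Yu: "Yu > 0"
    and prod: "Xu * Yu^n = (1/d^2) * Yv^n"
    and Qu: "1 - p + p*Yu - p*(1-p)*Xu > 0"
  shows "(p/(d-p)) * ln Xu + ln (1 - p + p*Yu - p*(1-p)*Xu)
         < (p/(d-p)) * ln (1/d^2) + ln (1 - p + p*Yv - p*(1-p)*(1/d^2))"
proof -
  have d1: "d \<ge> 2" using n1 by (simp add: d_def)
  have dn: "real (n+1) = d" by (simp add: d_def)
  have dp: "d - p > 0" using d1 p1 by simp
  have nr: "real n \<ge> 1" using n1 by simp
  define K where "K = (1/d^2) * Yv^n"
  have "(n/d)^2 > 0" using n1 d1 by simp
  hence Yv0: "Yv > 0" using Yv by linarith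
  have K0: "K > 0" using Yv0 d1 by (simp add: K_def)
  have "1/d^2 > 0" using d1 by simp
  hence Xu0: "Xu > 0" using Xu by linarith
  have KXu: "K = Xu * Yu^n" using prod by (simp add: K_def)
  have KX: "K / Yu^n = Xu" using Yu unfolding KXu by simp
  have "Yu^n < Yv^n"
  proof -
    have "Yu^n = K / Xu" using KX Xu0 Yu by (simp add: field_simps)
    also have "\<dots> < K / (1/d^2)" using Xu Xu0 K0 d1 by (intro divide_strict_left_mono) auto
    also have "\<dots> = Yv^n" using d1 by (simp add: K_def)
    finally show ?thesis .
  qed
  hence YuYv: "Yu < Yv" using Yv0 power_less_imp_less_base[of Yu n Yv] by simp
  define P where "P y = K / y^n" for y
  define Q where "Q y = 1 - p + p*y - p*(1-p)*P y" for y
  define Q' where "Q' y = p + p*(1-p)*(real n * K / y^(n+1))" for y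
  define b where "b = p * n / (d - p)"
  define \<phi> where "\<phi> y = ln (Q y) - b * ln y" for y
  define \<phi>' where "\<phi>' y = Q' y / Q y - b / y" for y
  have QYu: "Q Yu = 1 - p + p*Yu - p*(1-p)*Xu"
    using KX by (simp add: Q_def P_def)
  have QYv: "Q Yv = 1 - p + p*Yv - p*(1-p)*(1/d^2)"
    using Yv0 by (simp add: Q_def P_def K_def)
  have Qpos: "Q y > 0" if "Yu \<le> y" for y
  proof -
    have y0: "y > 0" using that Yu by simp
    have "K / y^n \<le> K / Yu^n" using that Yu K0 y0
      by (intro divide_left_mono power_mono) auto
    hence "p*(1-p)*(K/y^n) \<le> p*(1-p)*(K/Yu^n)" using p0 p1 by (intro mult_left_mono) auto
    moreover have "p*Yu \<le> p*y" using that p0 by simp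
    ultimately have "Q Yu \<le> Q y" unfolding Q_def P_def by linarith
    thus ?thesis using QYu Qu by simp
  qed
  have der: "DERIV \<phi> y :> \<phi>' y" if "Yu \<le> y" for y
  proof -
    have y0: "y > 0" using that Yu by simp
    have hP: "DERIV P y :> - (real n * K / y^(n+1))"
      unfolding P_def[abs_def] by (rule deriv_Kpow[OF y0])
    have hQ: "DERIV Q y :> Q' y"
      unfolding Q_def[abs_def] Q'_def using hP by (auto intro!: derivative_eq_intros)
    have Qy: "Q y > 0" using Qpos[OF that] .
    show ?thesis
      unfolding \<phi>_def[abs_def] \<phi>'_def using hQ Qy y0
      by (auto intro!: derivative_eq_intros simp: field_simps)
  qed
  have der_pos: "\<phi>' z > 0" if z: "Yu < z" "z < Yv" for z
  proof -
    have z0: "z > 0" using z Yu by simp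
    define x where "x = K / z^n"
    define w where "w = z / n^2"
    have x0: "x > 0" using K0 z0 by (simp add: x_def)
    have w0: "w > 0" using z0 n1 by (simp add: w_def)
    have nw: "n*w = z/n" using nr by (simp add: w_def power2_eq_square)
    have D: "d*z/n + d*x - 1 > 0"
    proof (rule ccontr)
      assume nD: "\<not> ?thesis"
      have wn: "w^n = z^n / (real n)^(2*n)"
        by (simp add: w_def power_divide power_mult)
      have xw: "x * w^n = K / (real n)^(2*n)"
        using z0 unfolding wn x_def by simp
      have Kge: "K \<ge> (1/d^2) * ((n/d)^2)^n"
        unfolding K_def using Yv d1 by (intro mult_left_mono power_mono) auto
      have e1: "((n/d)^2)^n = (real n)^(2*n) / (d^2)^n"
        by (simp add: power_divide power_mult)
      have "(1/d^2)^(n+1) = (1/d^2) * ((n/d)^2)^n / (real n)^(2*n)"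
        using nr d1 unfolding e1 by (simp add: power_divide)
      also have "\<dots> \<le> K / (real n)^(2*n)"
        using Kge nr by (intro divide_right_mono) auto
      finally have lo: "(1/d^2)^(n+1) \<le> x * w^n" using xw by simp
      have "(x + n*w)/real (n+1) = (d*z/n + d*x)/d^2"
        unfolding nw dn using d1 nr by (simp add: field_simps power2_eq_square)
      also have "\<dots> \<le> 1/d^2" using nD d1 by (intro divide_right_mono) auto
      finally have m: "(x + n*w)/real (n+1) \<le> 1/d^2" .
      have up: "((x + n*w)/real (n+1))^(n+1) \<le> (1/d^2)^(n+1)"
        using m x0 w0 by (intro power_mono) auto
      have xw_eq: "x = w"
      proof (rule ccontr)
        assume "x \<noteq> w"
        hence "x * w^n < ((x + n*w)/real (n+1))^(n+1)" by (rule amgm(2)[OF x0 w0 _ n1])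
        thus False using lo up by linarith
      qed
      have mx: "(x + n*w)/real (n+1) = x" using xw_eq by (simp add: field_simps)
      have "(1/d^2)^Suc n \<le> x^Suc n" using lo xw_eq by simp
      hence x_ge: "1/d^2 \<le> x" using x0 power_le_imp_le_base[of "1/d^2" n x] by simp
      have x_eq: "x = 1/d^2" using x_ge m mx by simp
      have z_eq: "z = (n/d)^2"
      proof -
        have "z = n^2 * w" using nr by (simp add: w_def)
        thus ?thesis using x_eq xw_eq by (simp add: power_divide)
      qed
      have "K = x * z^n" using z0 by (simp add: x_def)
      hence "(1/d^2) * Yv^n = (1/d^2) * z^n" using x_eq by (simp add: K_def)
      hence "Yv^n = z^n" using d1 by simp
      hence "Yv = z" using Yv0 z0 n1 power_eq_imp_eq_base[of Yv n z] by simp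
      thus False using z by simp
    qed
    have Qz: "Q z > 0" using Qpos z by simp
    have zQ': "z * Q' z = p*z + p*(1-p)*n*x"
      using z0 by (simp add: Q'_def x_def field_simps)
    have alg: "(d-p)*(p*z + p*(1-p)*n*x) - p*n*(1-p+p*z-p*(1-p)*x) = p*(1-p)*n*(d*z/n + d*x - 1)"
      using nr unfolding d_def by (simp add: field_simps)
    have Qzx: "Q z = 1-p+p*z-p*(1-p)*x" by (simp add: Q_def P_def x_def)
    have key: "z * Q' z - b * Q z = p*(1-p)*n*(d*z/n + d*x - 1)/(d-p)"
      unfolding zQ' Qzx b_def using dp alg by (simp add: field_simps)
    have kpos: "z * Q' z - b * Q z > 0"
      unfolding key using p0 p1 nr D dp by (intro divide_pos_pos mult_pos_pos) auto
    have "\<phi>' z = (z * Q' z - b * Q z) / (z * Q z)"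
      unfolding \<phi>'_def using z0 Qz by (simp add: field_simps)
    thus ?thesis using kpos z0 Qz by simp
  qed
  obtain z where z: "Yu < z" "z < Yv" "\<phi> Yv - \<phi> Yu = (Yv - Yu) * \<phi>' z"
    using MVT2[OF YuYv, of \<phi> \<phi>'] der by auto
  have "(Yv - Yu) * \<phi>' z > 0" using der_pos[OF z(1,2)] YuYv by (simp add: mult_pos_pos)
  hence "\<phi> Yu < \<phi> Yv" using z(3) by linarith
  moreover have lx: "ln Xu = ln K - n * ln Yu"
    using K0 Yu KX[symmetric] by (simp add: ln_div ln_realpow)
  moreover have ld: "ln (1/d^2) = ln K - n * ln Yv"
    using K0 Yv0 d1 by (simp add: K_def ln_mult ln_div ln_realpow)
  moreover have bb: "b = p/(d-p) * n" by (simp add: b_def)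
  moreover have "p/(d-p) * ln Xu = p/(d-p) * ln K - b * ln Yu"
    unfolding lx bb by (simp add: algebra_simps)
  moreover have "p/(d-p) * ln (1/d^2) = p/(d-p) * ln K - b * ln Yv"
    unfolding ld bb by (simp add: algebra_simps)
  ultimately show ?thesis
    unfolding QYu[symmetric] QYv[symmetric] \<phi>_def
    by linarith
qed

lemma one_plus_lt2:
  fixes s :: complex assumes "cmod s \<le> 1" "s \<noteq> 1"
  shows "cmod (1 + s) < 2"
proof -
  define a where "a = Re s"
  define b where "b = Im s"
  have "(cmod s)^2 \<le> 1" using assms(1) by (simp add: power_le_one)
  hence h: "a^2 + b^2 \<le> 1" by (simp add: cmod_power2 a_def b_def)
  have ab: "a \<noteq> 1 \<or> b \<noteq> 0" using assms(2) by (auto simp: complex_eq_iff a_def b_def)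
  have a2: "a^2 \<le> 1" using h zero_le_power2[of b] by linarith
  have "\<bar>a\<bar> \<le> 1" using a2 power2_le_iff_abs_le[of 1 a] by simp
  hence a1: "a \<le> 1" by linarith
  have e: "(cmod (1+s))^2 = 1 + 2*a + (a^2 + b^2)" unfolding cmod_power2 by (simp add: a_def b_def power2_eq_square algebra_simps)
  have "(cmod (1+s))^2 < 4"
  proof (cases "a = 1")
    case True
    hence "b \<noteq> 0" using ab by simp
    hence "b^2 > 0" by simp
    hence "a^2 + b^2 > 1" using True by simp
    thus ?thesis using h by simp
  next
    case False
    hence "a < 1" using a1 by simp
    thus ?thesis unfolding e using h by simp
  qed
  hence "(cmod (1+s))^2 < 2^2" by simp
  thus ?thesis by (rule power_less_imp_less_base) simp
qed

lemma geom_sum_lt: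
  fixes s :: complex assumes "cmod s \<le> 1" "s \<noteq> 1"
  shows "cmod (\<Sum>i<m+2. s^i) < real (m+2)"
proof (induction m)
  case 0
  have "(\<Sum>i<0+2. s^i) = 1 + s" by (simp add: numeral_2_eq_2)
  thus ?case using one_plus_lt2[OF assms] by simp
next
  case (Suc m)
  have "(\<Sum>i<Suc m + 2. s^i) = (\<Sum>i<m+2. s^i) + s^(m+2)" by simp
  hence "cmod (\<Sum>i<Suc m + 2. s^i) \<le> cmod (\<Sum>i<m+2. s^i) + cmod s^(m+2)"
    by (metis norm_triangle_ineq norm_power)
  moreover have "cmod s^(m+2) \<le> 1" by (rule power_le_one[OF norm_ge_zero assms(1)])
  ultimately show ?case using Suc by simp
qed

lemma smallest_root:
  fixes u v :: complex and d :: nat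
  assumes d2: "d \<ge> 2" and vr: "cmod v = 1 / real d"
    and eq: "u * (1+u)^(d-1) = v * (1+v)^(d-1)" and uv: "u \<noteq> v"
  shows "cmod u > cmod v"
proof (rule ccontr)
  assume "\<not> ?thesis"
  hence uv_le: "cmod u \<le> cmod v" by simp
  obtain m where dm: "d = m + 2" using d2 by (metis add.commute le_add_diff_inverse)
  define n where "n = d - 1"
  have n1: "n \<ge> 1" and dn: "d = Suc n" using d2 by (auto simp: n_def)
  have v0: "v \<noteq> 0" using vr d2 by auto
  have vlt: "cmod v < 1" using vr d2 by simp
  have eta0: "1 + v \<noteq> 0"
  proof
    assume "1 + v = 0" hence "v = -1" by (simp add: add_eq_0_iff)
    thus False using vlt by simp
  qed
  have fv0: "v * (1+v)^n \<noteq> 0" using v0 eta0 by simp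
  define \<zeta> where "\<zeta> = 1 + u"
  define \<eta> where "\<eta> = 1 + v"
  have eqn: "u * \<zeta>^n = v * \<eta>^n" using eq by (simp add: \<zeta>_def \<eta>_def n_def)
  have z0: "\<zeta> \<noteq> 0"
  proof
    assume "\<zeta> = 0" hence "u * \<zeta>^n = 0" using n1 by simp
    thus False using eqn fv0 by (simp add: \<eta>_def)
  qed
  have "cmod \<eta> ^ n \<le> cmod \<zeta> ^ n"
  proof (rule ccontr)
    assume "\<not> ?thesis"
    hence lt: "cmod \<zeta> ^ n < cmod \<eta> ^ n" by simp
    have "cmod u * cmod \<zeta> ^ n = cmod v * cmod \<eta> ^ n" using arg_cong[OF eqn, of cmod] by (simp add: norm_mult norm_power)
    moreover have "cmod u * cmod \<zeta> ^ n \<le> cmod v * cmod \<zeta> ^ n" using uv_le by (simp add: mult_right_mono)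
    moreover have "cmod v * cmod \<zeta> ^ n < cmod v * cmod \<eta> ^ n" using lt v0 by simp
    ultimately show False by simp
  qed
  hence "cmod \<eta> ^ Suc (n-1) \<le> cmod \<zeta> ^ Suc (n-1)" using n1 by simp
  hence "cmod \<eta> \<le> cmod \<zeta>" by (rule power_le_imp_le_base) simp
  define s where "s = \<eta> / \<zeta>"
  have s1: "cmod s \<le> 1" using \<open>cmod \<eta> \<le> cmod \<zeta>\<close> z0 by (simp add: s_def norm_divide divide_le_eq_1)
  have eta_s: "\<eta> = s * \<zeta>" using z0 by (simp add: s_def)
  have sne: "s \<noteq> 1" using uv eta_s by (auto simp: \<zeta>_def \<eta>_def)
  have en: "\<eta>^n = s^n * \<zeta>^n" by (simp add: eta_s power_mult_distrib)
  have ue: "u = \<zeta> - 1" by (simp add: \<zeta>_def)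
  have ve: "v = s*\<zeta> - 1" using eta_s by (simp add: \<eta>_def algebra_simps)
  have "(\<zeta> - 1) * \<zeta>^n = (s*\<zeta> - 1) * (s^n * \<zeta>^n)"
    using eqn unfolding en by (simp add: ue[symmetric] ve[symmetric])
  hence "(\<zeta> - 1) * \<zeta>^n = ((s*\<zeta> - 1) * s^n) * \<zeta>^n" by (simp add: mult.assoc)
  hence k: "\<zeta> - 1 = (s*\<zeta> - 1) * s^n" using z0 by simp
  have "v * (1 - s^d) = s - 1"
  proof -
    have "v * (1 - s^d) = (s*\<zeta> - 1) - s * ((s*\<zeta> - 1) * s^n)" unfolding ve dn by (simp add: algebra_simps)
    also have "\<dots> = s - 1" unfolding k[symmetric] by (simp add: algebra_simps)
    finally show ?thesis .
  qed
  hence "(1 - s) * (v * (\<Sum>i<d. s^i)) = (1 - s) * (-1)" by (simp add: one_diff_power_eq algebra_simps)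
  moreover have "1 - s \<noteq> 0" using sne by simp
  ultimately have "v * (\<Sum>i<d. s^i) = -1" by (metis mult_left_cancel)
  hence "cmod v * cmod (\<Sum>i<d. s^i) = 1" by (metis norm_mult norm_minus_cancel norm_one)
  hence "cmod (\<Sum>i<d. s^i) = real d" using vr d2 by (simp add: field_simps)
  moreover have "cmod (\<Sum>i<d. s^i) < real d" using geom_sum_lt[OF s1 sne, of m] dm by simp
  ultimately show False by simp
qed

lemma poly_Fpoly: "poly (Fpoly d v) x = x * (1 + x) ^ (d - 1) - v * (1 + v) ^ (d - 1)"
  by (simp add: Fpoly_def)

lemma Fpoly_nz: "Fpoly d v \<noteq> 0"
proof
  assume F: "Fpoly d v = 0"
  have "poly (Fpoly d v) 1 - poly (Fpoly d v) 0 = (2::complex)^(d-1)" by (simp add: poly_Fpoly)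
  thus False using F by simp
qed

lemma order_bound:
  fixes v :: complex and d :: nat
  assumes d2: "d \<ge> 2" and vr: "cmod v = 1 / real d"
  shows "order v (Fpoly d v) \<le> (if v = complex_of_real (-1 / real d) then 2 else 1)"
proof -
  obtain m where dm: "d = Suc (Suc m)" using d2 by (metis add_2_eq_Suc le_Suc_ex)
  define F where "F = Fpoly d v"
  define c where "c = v * (1+v)^(Suc m)"
  have pF: "poly F = (\<lambda>x. x * (1+x)^Suc m - c)" by (rule ext) (simp add: F_def poly_Fpoly dm c_def)
  define g1 where "g1 x = (1+x)^Suc m + x * (of_nat (Suc m) * (1+x)^m)" for x :: complex
  define g2 where "g2 x = of_nat (Suc m) * (1+x)^m + (of_nat (Suc m) * (1+x)^m + x * (of_nat (Suc m) * (of_nat m * (1+x)^(m-1))))" for x :: complex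
  have D1: "DERIV (poly F) x :> g1 x" for x
    unfolding pF g1_def
    apply (auto intro!: derivative_eq_intros)
    apply (cases m) apply (auto simp: algebra_simps)
    done
  have pF1: "poly (pderiv F) = g1"
    by (rule ext) (meson DERIV_unique D1 poly_DERIV)
  have D2: "DERIV g1 x :> g2 x" for x
    unfolding g1_def[abs_def] g2_def
    apply (auto intro!: derivative_eq_intros)
    apply (cases m) apply (auto simp: algebra_simps)
    done
  have pF2: "poly (pderiv (pderiv F)) = g2"
    by (rule ext) (metis DERIV_unique D2 poly_DERIV pF1)
  have F0: "F \<noteq> 0" by (simp add: F_def Fpoly_nz)
  have Fv: "poly F v = 0" by (simp add: pF c_def)
  have ord1: "order v F = Suc (order v (pderiv F))" by (rule order_pderiv[OF F0 Fv])
  have v1: "1 + v \<noteq> 0"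
  proof
    assume "1 + v = 0" hence "v = -1" by (simp add: add_eq_0_iff)
    thus False using vr d2 by simp
  qed
  have g1v: "g1 v = (1+v)^m * (1 + of_nat d * v)"
    by (simp add: g1_def dm algebra_simps)
  show ?thesis
  proof (cases "poly (pderiv F) v = 0")
    case False
    hence "order v (pderiv F) = 0" by (simp add: order_root)
    thus ?thesis using ord1 by (simp add: F_def)
  next
    case True
    hence "g1 v = 0" using pF1 by simp
    hence "1 + of_nat d * v = 0" using v1 g1v by simp
    hence vd: "v = complex_of_real (-1 / real d)" using d2
      by (simp add: field_simps) (metis add.commute add_eq_0_iff minus_equation_iff mult.commute)
    have F10: "pderiv F \<noteq> 0" using pF1 by (metis g1_def poly_0 mult_zero_left add_0_right power_one one_neq_zero add_0 power_0 ) 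
    have ord2: "order v (pderiv F) = Suc (order v (pderiv (pderiv F)))" by (rule order_pderiv[OF F10 True])
    have "g2 v \<noteq> 0"
    proof (cases m)
      case 0
      thus ?thesis by (simp add: g2_def)
    next
      case (Suc k)
      have e: "g2 v = of_nat (Suc m) * (1+v)^k * (2 * (1+v) + v * of_nat m)"
        by (simp add: g2_def Suc algebra_simps)
      have "(of_nat (m+2)::complex) \<noteq> 0" by (simp only: of_nat_eq_0_iff)
      hence nz: "(of_nat m + 2::complex) \<noteq> 0" by (simp add: add.commute)
      have br: "2 * (1+v) + v * of_nat m = 1" using vd dm nz by (simp add: field_simps)
      have g2e: "g2 v = of_nat (Suc m) * (1+v)^k" unfolding e br by simp
      have sn: "(of_nat (Suc m)::complex) \<noteq> 0" by (metis of_nat_eq_0_iff Zero_not_Suc)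
      have "(1+v)^k \<noteq> 0" using v1 by simp
      thus ?thesis unfolding g2e using sn by (simp only: mult_eq_0_iff) simp
    qed
    hence "poly (pderiv (pderiv F)) v \<noteq> 0" using pF2 by simp
    hence "order v (pderiv (pderiv F)) = 0" by (metis order_root)
    thus ?thesis using ord1 ord2 vd by (simp add: F_def)
  qed
qed

lemma cmod_1p2:
  fixes w :: complex and p :: real
  shows "(cmod (1 + of_real p * w))^2 = 1 - p + p * (cmod (1 + w))^2 - p * (1 - p) * (cmod w)^2"
  unfolding cmod_power2 by (simp add: power2_eq_square algebra_simps)

lemma repsi_less:
  fixes p :: real and d :: nat and u v :: complex
  assumes p0: "0 < p" and p1: "p < 1" and d2: "d \<ge> 2" and vr: "cmod v = 1 / real d"
    and eq: "u * (1+u)^(d-1) = v * (1+v)^(d-1)" and uv: "cmod u > cmod v"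
  shows "RePsi p d v < RePsi p d u"
proof -
  define n where "n = d - 1"
  have rn: "real n + 1 = real d" using d2 by (simp add: n_def)
  have n1: "n \<ge> 1" using d2 by (simp add: n_def)
  define a where "a = p / (real d - p)"
  have dpos: "real d \<ge> 2" using d2 by simp
  have v0: "cmod v > 0" using vr dpos by simp
  have u0: "cmod u > 0" using uv v0 by linarith
  have "1 - cmod v \<le> cmod (1 + v)" using norm_diff_ineq[of 1 v] by simp
  moreover have "1 - cmod v = real n / (real n + 1)" using rn vr dpos by (simp add: field_simps)
  ultimately have v1: "cmod (1+v) \<ge> real n / (real n + 1)" by simp
  have "real n / (real n + 1) > 0" using n1 by simp
  hence v1pos: "cmod (1+v) > 0" using v1 by linarith
  have pv: "cmod (1 + of_real p * v) > 0"
  proof -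
    have "1 - cmod (of_real p * v) \<le> cmod (1 + of_real p * v)" using norm_diff_ineq[of 1 "of_real p * v"] by simp
    moreover have "cmod (of_real p * v) = p / real d" using vr p0 by (simp add: norm_mult)
    moreover have "p / real d < 1" using p1 dpos by simp
    ultimately show ?thesis by linarith
  qed
  have eqn: "cmod u * cmod (1+u)^n = cmod v * cmod (1+v)^n"
    using arg_cong[OF eq, of cmod] by (simp add: norm_mult norm_power n_def)
  have u1pos: "cmod (1+u) > 0"
  proof (rule ccontr)
    assume "\<not> ?thesis" hence "cmod (1+u) = 0" by simp
    hence "cmod u * cmod (1+u)^n = 0" using n1 by simp
    thus False using eqn v0 v1pos by simp
  qed
  define Xu where "Xu = (cmod u)^2"
  define Yu where "Yu = (cmod (1+u))^2"
  define Yv where "Yv = (cmod (1+v))^2"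
  have sq: "(x^2)^n = (x^n)^2" for x :: real by (metis power_mult mult.commute)
  have Yv_ge: "Yv \<ge> (real n / (real n + 1))^2" unfolding Yv_def using v1 by (intro power_mono) auto
  have Xu_gt: "Xu > 1 / (real n + 1)^2"
  proof -
    have "(cmod v)^2 < (cmod u)^2" using uv v0 by (intro power_strict_mono) auto
    moreover have "(cmod v)^2 = 1 / (real n + 1)^2" using vr rn by (simp add: power_divide)
    ultimately show ?thesis by (simp add: Xu_def)
  qed
  have Yu0: "Yu > 0" using u1pos by (simp add: Yu_def)
  have prod: "Xu * Yu^n = (1 / (real n + 1)^2) * Yv^n"
  proof -
    have "Xu * Yu^n = (cmod u * cmod (1+u)^n)^2" by (simp add: Xu_def Yu_def sq power_mult_distrib)
    also have "\<dots> = (cmod v * cmod (1+v)^n)^2" by (simp add: eqn)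
    also have "\<dots> = (cmod v)^2 * Yv^n" by (simp add: Yv_def sq power_mult_distrib)
    also have "(cmod v)^2 = 1 / (real n + 1)^2" using vr rn by (simp add: power_divide)
    finally show ?thesis .
  qed
  have Qv_eq: "(cmod (1 + of_real p * v))^2 = 1 - p + p*Yv - p*(1-p)*(1/(real n + 1)^2)"
    using cmod_1p2[of p v] vr rn by (simp add: Yv_def power_divide)
  have Qu_eq: "(cmod (1 + of_real p * u))^2 = 1 - p + p*Yu - p*(1-p)*Xu"
    using cmod_1p2[of p u] by (simp add: Yu_def Xu_def)
  have RPv: "RePsi p d v = ereal (- (a * ln (cmod v)) - ln (cmod (1 + of_real p * v)))"
    using v0 pv by (simp add: RePsi_def eln_def a_def)
  show ?thesis
  proof (cases "cmod (1 + of_real p * u) = 0")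
    case True
    have "RePsi p d u = \<infinity>" using True u0 by (simp add: RePsi_def eln_def)
    thus ?thesis unfolding RPv by simp
  next
    case False
    hence pu: "cmod (1 + of_real p * u) > 0" by simp
    have Qu: "1 - p + p*Yu - p*(1-p)*Xu > 0" using Qu_eq pu by (metis zero_less_power)
    have K: "(p/((real n + 1)-p)) * ln Xu + ln (1 - p + p*Yu - p*(1-p)*Xu)
         < (p/((real n + 1)-p)) * ln (1/(real n + 1)^2) + ln (1 - p + p*Yv - p*(1-p)*(1/(real n + 1)^2))"
      by (rule key_real[OF p0 p1 n1 Yv_ge Xu_gt Yu0 prod Qu])
    have l1: "ln Xu = 2 * ln (cmod u)" using u0 by (simp add: Xu_def ln_realpow)
    have l2: "ln (1/(real n + 1)^2) = 2 * ln (cmod v)"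
      using v0 vr rn by (simp add: ln_realpow flip: power_one_over)
    have l3: "ln (1 - p + p*Yu - p*(1-p)*Xu) = 2 * ln (cmod (1 + of_real p * u))"
      unfolding Qu_eq[symmetric] using pu by (simp add: ln_realpow)
    have l4: "ln (1 - p + p*Yv - p*(1-p)*(1/(real n + 1)^2)) = 2 * ln (cmod (1 + of_real p * v))"
      unfolding Qv_eq[symmetric] using pv by (simp add: ln_realpow)
    have "a * ln (cmod u) + ln (cmod (1 + of_real p * u)) < a * ln (cmod v) + ln (cmod (1 + of_real p * v))"
    proof -
      have "2 * (a * ln (cmod u) + ln (cmod (1 + of_real p * u))) < 2 * (a * ln (cmod v) + ln (cmod (1 + of_real p * v)))"
        using K unfolding l1 l2 l3 l4 unfolding rn a_def[symmetric] by (simp add: algebra_simps)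
      thus ?thesis by simp
    qed
    moreover have "RePsi p d u = ereal (- (a * ln (cmod u)) - ln (cmod (1 + of_real p * u)))"
      using u0 pu by (simp add: RePsi_def eln_def a_def)
    ultimately show ?thesis unfolding RPv by simp
  qed
qed

lemma mem_nontriv:
  fixes v u :: complex and d :: nat
  assumes d2: "d \<ge> 2" and vr: "cmod v = 1 / real d"
    and mem: "u \<in># nontriv_roots d v - (if v = complex_of_real (- 1 / real d) then {# v #} else {#})"
  shows "u \<noteq> v \<and> u * (1+u)^(d-1) = v * (1+v)^(d-1)"
proof -
  define F where "F = Fpoly d v"
  define E where "E = (if v = complex_of_real (- 1 / real d) then {# v #} else {#})"
  have F0: "F \<noteq> 0" by (simp add: F_def Fpoly_nz)
  have c: "0 < count (nontriv_roots d v - E) u"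
    using mem unfolding E_def by (simp only: count_greater_zero_iff)
  hence c2: "0 < count (proots F) u - count {# v #} u - count E u"
    by (simp only: nontriv_roots_def F_def count_diff)
  have ob: "order v F \<le> (if v = complex_of_real (-1 / real d) then 2 else 1)"
    unfolding F_def by (rule order_bound[OF d2 vr])
  have cE: "count E v = (if v = complex_of_real (-1 / real d) then 1 else 0)"
    by (simp add: E_def)
  have uv: "u \<noteq> v"
  proof
    assume "u = v"
    hence "0 < order v F - 1 - count E v" using c2 F0 by simp
    thus False using ob cE by (simp split: if_splits)
  qed
  have "0 < count (proots F) u" using c2 by arith
  hence "order u F > 0" by (simp only: count_proots[OF F0])
  hence "poly F u = 0" using F0 order_gt_0_iff by blast
  hence "u * (1+u)^(d-1) = v * (1+v)^(d-1)" by (simp add: F_def poly_Fpoly)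
  with uv show ?thesis by simp
qed

theorem proposition5p9:
  fixes p :: real and d :: nat
  assumes "0 < p" and "p < 1" and "2 \<le> d"
  shows "\<exists>\<Gamma>0 :: real \<Rightarrow> complex.
           simple_path \<Gamma>0 \<and> pathfinish \<Gamma>0 = pathstart \<Gamma>0 \<and>
           0 \<notin> path_image \<Gamma>0 \<and> winding_number \<Gamma>0 0 \<noteq> 0 \<and>
           complex_of_real (- 1 / real d) \<in> path_image \<Gamma>0 \<and>
           (\<forall>v \<in> path_image \<Gamma>0.
              \<forall>u \<in># nontriv_roots d v -
                     (if v = complex_of_real (- 1 / real d) then {# v #} else {#}).
                 RePsi p d v < RePsi p d u)"
proof -
  define r where "r = 1 / real d"
  have r0: "r > 0" using assms(3) by (simp add: r_def)
  have pi: "path_image (circlepath 0 r) = sphere 0 r" using r0 by simp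
  have main: "\<forall>v \<in> path_image (circlepath 0 r).
              \<forall>u \<in># nontriv_roots d v -
                     (if v = complex_of_real (- 1 / real d) then {# v #} else {#}).
                 RePsi p d v < RePsi p d u"
  proof (intro ballI)
    fix v u
    assume v: "v \<in> path_image (circlepath 0 r)"
    hence vr: "cmod v = 1 / real d" using pi by (simp add: r_def)
    assume "u \<in># nontriv_roots d v - (if v = complex_of_real (- 1 / real d) then {# v #} else {#})"
    from mem_nontriv[OF assms(3) vr this] have uv: "u \<noteq> v" and eq: "u * (1+u)^(d-1) = v * (1+v)^(d-1)" by auto
    have "cmod u > cmod v" by (rule smallest_root[OF assms(3) vr eq uv])
    thus "RePsi p d v < RePsi p d u" by (rule repsi_less[OF assms(1,2,3) vr eq])
  qed
  have "complex_of_real (- 1 / real d) \<in> path_image (circlepath 0 r)"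
    unfolding pi using r0 by (simp add: r_def norm_divide)
  moreover have "winding_number (circlepath 0 r) 0 \<noteq> 0" using winding_number_circlepath_centre[OF r0] by simp
  moreover have "0 \<notin> path_image (circlepath 0 r)" unfolding pi using r0 by simp
  moreover have "simple_path (circlepath 0 r)" using r0 by (simp add: simple_path_circlepath)
  moreover have "pathfinish (circlepath 0 r) = pathstart (circlepath 0 r)" by simp
  ultimately show ?thesis using main by blast
qed

end
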